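(* Let $R$ be a finite set of $n$ robots, with coordination space $\chi=\mathbb{R}^n$, obstacle region, dynamics, brake-safe set $B_G$ and control law $g^G$ as described in the context, and let $G$ be an acyclic directed graph on vertex set $R$. For each $i\in R$ let $\bar x_i:=\sup\{x_i: x\in\chi^{\mathrm{obs}}_{ij}\text{ for some } j\ne i\}$ (with $\bar x_i=-\infty$ if this set is empty). Then for every initial condition $s\in B_G$ there exists $T>0$ such that for all $i\in R$, $$\pi_{x,i}(\Phi(T,s,g^G))>\bar x_i.$$
   Context: Robots $i\in R$ move along fixed paths; $x_i\in\mathbb{R}$ is the curvilinear coordinate of robot $i$, $x=(x_i)_{i\in R}\in\chi:=\mathbb{R}^n$, and $\{\mathbf e_i\}$ is the canonical basis of $\chi$. For each unordered pair $\{i,j\}$, $\chi^{\mathrm{obs}}_{ij}\subset\chi$ (configurations where $i$ and $j$ collide) is an open cylinder of the form $C_{ij}+\mathrm{span}\{\mathbf e_k:k\ne i,j\}$ where $C_{ij}$ is an open bounded convex subset of $\mathrm{span}\{\mathbf e_i,\mathbf e_j\}$ (possibly empty); $\chi^{\mathrm{obs}}=\bigcup_{\{i,j\}}\chi^{\mathrm{obs}}_{ij}$. For $i\neq j$ define $\chi^{\mathrm{obs}}_{i\succ j}:=\chi^{\mathrm{obs}}_{ij}-\mathbb{R}_+\mathbf e_i+\mathbb{R}_+\mathbf e_j$ (Minkowski sum). A priority graph is a directed graph $G$ with vertex set $R$ and edge set $E(G)$; an edge $(i,j)$ means $i$ has priority over $j$. Set $\chi^{\mathrm{obs}}_G:=\bigcup_{(i,j)\in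 E(G)}\chi^{\mathrm{obs}}_{i\succ j}$, $\chi^{\mathrm{free}}_G:=\chi\setminus\chi^{\mathrm{obs}}_G$. Dynamics: robot $i$ has state $s_i=(x_i,v_i)\in S_i:=\mathbb{R}\times[0,\overline v_i]$ with speed limit $\overline v_i>0$, and $\dot x_i=v_i$, $\dot v_i=\mathbf u_i(t)\,\delta(\mathbf u_i(t),v_i(t))$, where $\delta(u,v)=0$ if ($v=0$ and $u<0$) or ($v=\overline v_i$ and $u>0$), and $\delta=1$ otherwise. Controls take values in $U_i=[\underline u_i,\overline u_i]$ with $\underline u_i<0<\overline u_i$ and are piecewise constant on each slot $[k,k+1)$, $k\in\mathbb{N}$; $\mathbf U_i$ is the set of such controls, $\mathbf U=\prod_i\mathbf U_i$, $S=\prod_i S_i$, $U=\prod_i U_i$. $\Phi_i(t,s_i,\mathbf u_i)$ is the resulting flow of robot $i$ from $s_i$, and $\Phi(t,s,\mathbf u)=(\Phi_i(t,s_i,\mathbf u_i))_i$. $\underline{\mathbf u}$ denotes the constant control equal to $(\underline u_i)_i$. $\pi_x(s)=x$, $\pi_{x,i}(s)=x_i$. Brake-safe states: $B_G:=\{s\in S:\ \pi_x(\Phi(t,s,\underline{\mathbf u}))\in\chi^{\mathrm{free}}_G\ \forall t\ge0\}$. Impulse control: $\mathbf u_i^{\mathrm{impulse}}(t)=\overline u_i$ for $t\in[0,1)$ and $=\underline u_i$ for $t\ge1$. Worst-case control w.r.t. $i$: $\tilde{\mathbf u}^i$ with $\tilde{\mathbf u}^i_i=\mathbf u_i^{\mathrm{impulse}}$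 and $\tilde{\mathbf u}^i_j$ the constant control $\underline u_j$ for $j\ne i$. Control law $g^G:S\to U$: $g^G_i(s)=\underline u_i$ if there exists $(j,i)\in E(G)$ and $t\ge0$ with $\pi_x(\Phi(t,s,\tilde{\mathbf u}^i))\in\chi^{\mathrm{obs}}_{j\succ i}$; otherwise $g^G_i(s)=\overline u_i$. For a feedback law $h:S\to U$, $\Phi(t,s,h)$ denotes $\Phi(t,s,\mathbf u)$ where $\mathbf u\in\mathbf U$ satisfies $\mathbf u(k)=h(\Phi(k,s,\mathbf u))$ for all $k\in\mathbb{N}$. *)

theory Defs
  imports "HOL-Analysis.Analysis"
begin

text \<open>Robots are indexed by a finite type 'r; a configuration is a map 'r \<Rightarrow> real
  (the coordination space R^n, n = CARD('r)). The state of robot i is (x_i, v_i).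
  Controls are sampled: u :: nat \<Rightarrow> 'r \<Rightarrow> real, u k i is the (constant) control of
  robot i on the slot [k, k+1).\<close>

type_synonym 'r config = "'r \<Rightarrow> real"
type_synonym 'r jstate = "'r \<Rightarrow> real \<times> real"
type_synonym 'r control = "nat \<Rightarrow> 'r \<Rightarrow> real"

definition unit_vec :: "'r \<Rightarrow> 'r config" where
  "unit_vec i = (\<lambda>k. if k = i then 1 else 0)"

text \<open>Collision region of the pair {i,j}: cylinder over C i j \<subseteq> span{e_i,e_j},
  identified with a subset of real \<times> real via the coordinates (x_i, x_j).\<close>
definition obs_pair :: "('r \<Rightarrow> 'r \<Rightarrow> (real \<times> real) set) \<Rightarrow> 'r \<Rightarrow> 'r \<Rightarrow> 'r config set" where
  "obs_pair C i j = {x. (x i, x j) \<in> C i j}"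

definition obs_prio :: "('r \<Rightarrow> 'r \<Rightarrow> (real \<times> real) set) \<Rightarrow> 'r \<Rightarrow> 'r \<Rightarrow> 'r config set" where
  "obs_prio C i j = {y. \<exists>x \<in> obs_pair C i j. \<exists>a \<ge> 0. \<exists>b \<ge> 0.
        y = (\<lambda>k. x k - a * unit_vec i k + b * unit_vec j k)}"

definition obs_G :: "('r \<Rightarrow> 'r \<Rightarrow> (real \<times> real) set) \<Rightarrow> ('r \<times> 'r) set \<Rightarrow> 'r config set" where
  "obs_G C E = (\<Union>(i, j) \<in> E. obs_prio C i j)"

definition free_G :: "('r \<Rightarrow> 'r \<Rightarrow> (real \<times> real) set) \<Rightarrow> ('r \<times> 'r) set \<Rightarrow> 'r config set" where
  "free_G C E = UNIV - obs_G C E"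

text \<open>Single-robot dynamics under a constant control u during a slot:
  dv/dt = u * delta(u,v) with v saturated in [0, vmax], dx/dt = v.
  Solution for v0 \<in> [0, vmax]: v(tau) = min vmax (max 0 (v0 + u tau)).\<close>
definition vel :: "real \<Rightarrow> real \<Rightarrow> real \<Rightarrow> real \<Rightarrow> real" where
  "vel vm v u \<tau> = min vm (max 0 (v + u * \<tau>))"

definition slot_flow :: "real \<Rightarrow> real \<Rightarrow> real \<Rightarrow> real \<times> real \<Rightarrow> real \<times> real" where
  "slot_flow vm u \<tau> s = (fst s + integral {0..\<tau>} (\<lambda>\<sigma>. vel vm (snd s) u \<sigma>), vel vm (snd s) u \<tau>)"

fun slot_states :: "real \<Rightarrow> (nat \<Rightarrow> real) \<Rightarrow> real \<times> real \<Rightarrow> nat \<Rightarrow> real \<times> real" where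
  "slot_states vm u s 0 = s"
| "slot_states vm u s (Suc k) = slot_flow vm (u k) 1 (slot_states vm u s k)"

definition robot_flow :: "real \<Rightarrow> real \<Rightarrow> real \<times> real \<Rightarrow> (nat \<Rightarrow> real) \<Rightarrow> real \<times> real" where
  "robot_flow vm t s u = slot_flow vm (u (nat \<lfloor>t\<rfloor>)) (t - of_int \<lfloor>t\<rfloor>) (slot_states vm u s (nat \<lfloor>t\<rfloor>))"

definition flow :: "('r \<Rightarrow> real) \<Rightarrow> real \<Rightarrow> 'r jstate \<Rightarrow> 'r control \<Rightarrow> 'r jstate" where
  "flow vm t s u = (\<lambda>i. robot_flow (vm i) t (s i) (\<lambda>k. u k i))"

definition posn :: "'r jstate \<Rightarrow> 'r config" where
  "posn s = (\<lambda>i. fst (s i))"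

definition state_space :: "('r \<Rightarrow> real) \<Rightarrow> 'r jstate set" where
  "state_space vm = {s. \<forall>i. 0 \<le> snd (s i) \<and> snd (s i) \<le> vm i}"

definition brake_safe :: "('r \<Rightarrow> real) \<Rightarrow> ('r \<Rightarrow> real) \<Rightarrow> ('r \<Rightarrow> 'r \<Rightarrow> (real \<times> real) set)
    \<Rightarrow> ('r \<times> 'r) set \<Rightarrow> 'r jstate set" where
  "brake_safe vm ulow C E = {s \<in> state_space vm.
      \<forall>t \<ge> 0. posn (flow vm t s (\<lambda>k. ulow)) \<in> free_G C E}"

definition worst_ctrl :: "('r \<Rightarrow> real) \<Rightarrow> ('r \<Rightarrow> real) \<Rightarrow> 'r \<Rightarrow> 'r control" where
  "worst_ctrl ulow uhigh i = (\<lambda>k j. if j = i then (if k = 0 then uhigh i else ulow i) else ulow j)"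

definition ctrl_law :: "('r \<Rightarrow> real) \<Rightarrow> ('r \<Rightarrow> real) \<Rightarrow> ('r \<Rightarrow> real) \<Rightarrow> ('r \<Rightarrow> 'r \<Rightarrow> (real \<times> real) set)
    \<Rightarrow> ('r \<times> 'r) set \<Rightarrow> 'r jstate \<Rightarrow> 'r \<Rightarrow> real" where
  "ctrl_law vm ulow uhigh C E s = (\<lambda>i.
      if \<exists>j. (j, i) \<in> E \<and> (\<exists>t \<ge> 0. posn (flow vm t s (worst_ctrl ulow uhigh i)) \<in> obs_prio C j i)
      then ulow i else uhigh i)"

text \<open>Closed loop under a feedback law h: states at the sampling instants and the
  induced control u with u k = h (Phi(k, s, u)).\<close>
fun fb_states :: "('r \<Rightarrow> real) \<Rightarrow> ('r jstate \<Rightarrow> 'r \<Rightarrow> real) \<Rightarrow> 'r jstate \<Rightarrow> nat \<Rightarrow> 'r jstate" where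
  "fb_states vm h s 0 = s"
| "fb_states vm h s (Suc k) =
     (\<lambda>i. slot_flow (vm i) (h (fb_states vm h s k) i) 1 (fb_states vm h s k i))"

definition fb_ctrl :: "('r \<Rightarrow> real) \<Rightarrow> ('r jstate \<Rightarrow> 'r \<Rightarrow> real) \<Rightarrow> 'r jstate \<Rightarrow> 'r control" where
  "fb_ctrl vm h s = (\<lambda>k. h (fb_states vm h s k))"

definition fb_flow :: "('r \<Rightarrow> real) \<Rightarrow> real \<Rightarrow> 'r jstate \<Rightarrow> ('r jstate \<Rightarrow> 'r \<Rightarrow> real) \<Rightarrow> 'r jstate" where
  "fb_flow vm t s h = flow vm t s (fb_ctrl vm h s)"

definition xbar :: "('r \<Rightarrow> 'r \<Rightarrow> (real \<times> real) set) \<Rightarrow> 'r \<Rightarrow> ereal" where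
  "xbar C i = Sup {ereal (x i) | x j. j \<noteq> i \<and> x \<in> obs_pair C i j}"

end

theory Submission
  imports Defs
begin

lemma vel_nonneg: "vm \<ge> 0 \<Longrightarrow> vel vm v u \<tau> \<ge> 0"
  by (simp add: vel_def)

lemma vel_integrable: "(vel vm v u) integrable_on {a..b}"
proof -
  have "continuous_on {a..b} (\<lambda>\<sigma>. min vm (max 0 (v + u * \<sigma>)))"
    by (intro continuous_intros)
  then show ?thesis unfolding vel_def[abs_def] by (rule integrable_continuous_interval)
qed


lemma integral_vel_nonneg: "vm \<ge> 0 \<Longrightarrow> integral {0..\<tau>} (\<lambda>\<sigma>. vel vm v u \<sigma>) \<ge> 0"
  by (rule integral_nonneg[OF vel_integrable]) (simp add: vel_nonneg)

lemma integral_vel_ge: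
  assumes "c \<le> vm" "c \<le> v" "u \<ge> 0"
  shows "integral {0..1} (\<lambda>\<sigma>. vel vm v u \<sigma>) \<ge> c"
proof -
  have "integral {0..1::real} (\<lambda>\<sigma>. c) \<le> integral {0..1} (\<lambda>\<sigma>. vel vm v u \<sigma>)"
    by (rule integral_le[OF _ vel_integrable]) (use assms in \<open>auto simp: vel_def max_def intro: order_trans[OF _ le_add_same_cancel1[THEN iffD2]]\<close>)
  then show ?thesis by simp
qed

lemma slot_states_mono: "vm \<ge> 0 \<Longrightarrow> fst (slot_states vm u s n) \<ge> fst s"
proof (induction n)
  case (Suc n)
  then show ?case using integral_vel_nonneg[of vm 1] by (simp add: slot_flow_def add_increasing2)
qed simp

lemma robot_flow_mono:
  assumes "vm \<ge> 0" "t \<ge> 0"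
  shows "fst (robot_flow vm t s u) \<ge> fst s"
proof -
  have "fst (slot_states vm u s (nat \<lfloor>t\<rfloor>)) \<ge> fst s" by (rule slot_states_mono[OF assms(1)])
  then show ?thesis unfolding robot_flow_def slot_flow_def
    using integral_vel_nonneg[OF assms(1)] by (smt (verit) fst_conv)
qed


lemma xbar_upper:
  assumes "j \<noteq> i" "x \<in> obs_pair C j i"
  shows "ereal (x j) \<le> xbar C j"
  unfolding xbar_def
  by (rule Sup_upper, rule CollectI, rule exI[of _ x], rule exI[of _ i]) (use assms in auto)

lemma ctrl_high:
  assumes vm: "\<forall>j. vm j \<ge> 0" and noloop: "(i, i) \<notin> E"
    and pre: "\<forall>j. (j, i) \<in> E \<longrightarrow> xbar C j < ereal (fst (s' j))"
  shows "ctrl_law vm ulow uhigh C E s' i = uhigh i"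
proof -
  have "\<not> (posn (flow vm t s' (worst_ctrl ulow uhigh i)) \<in> obs_prio C j i)"
    if E: "(j, i) \<in> E" and t: "t \<ge> 0" for j t
  proof
    assume "posn (flow vm t s' (worst_ctrl ulow uhigh i)) \<in> obs_prio C j i"
    then obtain x a b where x: "x \<in> obs_pair C j i" and a: "a \<ge> 0"
      and y: "posn (flow vm t s' (worst_ctrl ulow uhigh i)) = (\<lambda>k. x k - a * unit_vec j k + b * unit_vec i k)"
      unfolding obs_prio_def by blast
    have ji: "j \<noteq> i" using E noloop by auto
    have "posn (flow vm t s' (worst_ctrl ulow uhigh i)) j = x j - a"
      using y ji by (simp add: unit_vec_def)
    moreover have "posn (flow vm t s' (worst_ctrl ulow uhigh i)) j \<ge> fst (s' j)"
      unfolding posn_def flow_def using robot_flow_mono vm t by blast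
    ultimately have "fst (s' j) \<le> x j" using a by linarith
    moreover have "ereal (x j) \<le> xbar C j" by (rule xbar_upper[OF ji x])
    moreover have "xbar C j < ereal (fst (s' j))" using pre E by blast
    ultimately have "ereal (x j) < ereal (fst (s' j))" using le_less_trans by blast
    then have "x j < fst (s' j)" by simp
    with \<open>fst (s' j) \<le> x j\<close> show False by linarith
  qed
  then show ?thesis unfolding ctrl_law_def by auto
qed

lemma slot_fb: "slot_states (vm i) (\<lambda>k. h (fb_states vm h s k) i) (s i) k = fb_states vm h s k i"
  by (induction k) auto

lemma fb_flow_nat: "posn (fb_flow vm (real N) s h) i = fst (fb_states vm h s N i)"
  unfolding posn_def fb_flow_def flow_def robot_flow_def fb_ctrl_def
  by (simp add: slot_flow_def slot_fb)

lemma diverge: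
  fixes p v :: "nat \<Rightarrow> real"
  assumes vm: "vm > 0" and uh: "uh > 0"
    and p: "\<And>k. p (Suc k) = p k + integral {0..1} (vel vm (v k) (u k))"
    and v: "\<And>k. v (Suc k) = vel vm (v k) (u k) 1"
    and v0: "\<And>k. v k \<ge> 0"
    and u: "\<And>k. k \<ge> k0 \<Longrightarrow> u k = uh"
  shows "\<exists>K. \<forall>k\<ge>K. p k > M"
proof -
  define c where "c = min vm uh"
  have c: "c > 0" "c \<le> vm" using vm uh by (auto simp: c_def)
  have vc: "v k \<ge> c" if "k \<ge> Suc k0" for k
  proof -
    define m where "m = k - 1"
    have k: "k = Suc m" "m \<ge> k0" using that unfolding m_def by auto
    have "v k = min vm (max 0 (v m + uh))" using u[OF k(2)] unfolding k v by (simp add: vel_def)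
    then show ?thesis using v0[of m] uh c(2) unfolding c_def by (simp add: min_def max_def)
  qed
  have mono: "incseq p"
    by (rule incseq_SucI) (simp add: p integral_vel_nonneg vm less_imp_le)
  have step: "p (Suc k) \<ge> p k + c" if "k \<ge> Suc k0" for k
  proof -
    have "u k = uh" using u that by simp
    then have "integral {0..1} (vel vm (v k) (u k)) \<ge> c"
      using integral_vel_ge[OF c(2) vc[OF that], of "u k"] uh by simp
    then show ?thesis using p[of k] by linarith
  qed
  have lin: "p (Suc k0 + m) \<ge> p (Suc k0) + real m * c" for m
  proof (induction m)
    case (Suc m)
    have "p (Suc k0 + Suc m) \<ge> p (Suc k0 + m) + c" using step[of "Suc k0 + m"] by simp
    then show ?case using Suc.IH by (simp add: distrib_right)
  qed simp
  obtain m where m: "M - p (Suc k0) < real m * c"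
    using reals_Archimedean3[OF c(1)] by blast
  show ?thesis
  proof (intro exI allI impI)
    fix k assume "Suc k0 + m \<le> k"
    then have "p k \<ge> p (Suc k0 + m)" using mono by (simp add: incseq_def)
    then show "p k > M" using lin[of m] m by linarith
  qed
qed


lemma xbar_bound:
  fixes C :: "'r::finite \<Rightarrow> 'r \<Rightarrow> (real \<times> real) set"
  assumes "\<forall>i j. i \<noteq> j \<longrightarrow> bounded (C i j)"
  shows "\<exists>M. xbar C i \<le> ereal M"
proof -
  have "\<forall>j. \<exists>B. j \<noteq> i \<longrightarrow> (\<forall>z\<in>C i j. fst z \<le> B)"
  proof
    fix j
    show "\<exists>B. j \<noteq> i \<longrightarrow> (\<forall>z\<in>C i j. fst z \<le> B)"
    proof (cases "j = i")
      case False
      then have "bounded (C i j)" using assms by auto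
      then obtain B where B: "\<forall>z\<in>C i j. norm z \<le> B" by (auto simp: bounded_iff)
      have "\<forall>z\<in>C i j. fst z \<le> B"
      proof
        fix z assume "z \<in> C i j"
        then have "norm z \<le> B" using B by auto
        moreover have "fst z \<le> norm (fst z)" by simp
        moreover have "norm (fst z) \<le> norm z" using norm_fst_le[of "fst z" "snd z"] by simp
        ultimately show "fst z \<le> B" by linarith
      qed
      then show ?thesis by blast
    qed auto
  qed
  then obtain Bf where Bf: "\<And>j. j \<noteq> i \<Longrightarrow> \<forall>z\<in>C i j. fst z \<le> Bf j" by metis
  define M where "M = (\<Sum>j\<in>UNIV. \<bar>Bf j\<bar>)"
  have "xbar C i \<le> ereal M"
    unfolding xbar_def
  proof (rule Sup_least)
    fix y assume "y \<in> {ereal (x i) | x j. j \<noteq> i \<and> x \<in> obs_pair C i j}"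
    then obtain x j where y: "y = ereal (x i)" and j: "j \<noteq> i" and x: "(x i, x j) \<in> C i j"
      by (auto simp: obs_pair_def)
    have "x i \<le> Bf j" using Bf[OF j] x by fastforce
    also have "\<dots> \<le> \<bar>Bf j\<bar>" by simp
    also have "\<dots> \<le> M" unfolding M_def by (rule member_le_sum) auto
    finally show "y \<le> ereal M" using y by simp
  qed
  then show ?thesis by blast
qed


theorem theorem3:
  fixes vm ulow uhigh :: "'r::finite \<Rightarrow> real"
    and C :: "'r \<Rightarrow> 'r \<Rightarrow> (real \<times> real) set"
    and E :: "('r \<times> 'r) set"
    and s :: "'r \<Rightarrow> real \<times> real"
  assumes vm_pos: "\<forall>i. vm i > 0"
    and u_bounds: "\<forall>i. ulow i < 0 \<and> 0 < uhigh i"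
    and C_open: "\<forall>i j. i \<noteq> j \<longrightarrow> open (C i j)"
    and C_bounded: "\<forall>i j. i \<noteq> j \<longrightarrow> bounded (C i j)"
    and C_convex: "\<forall>i j. i \<noteq> j \<longrightarrow> convex (C i j)"
    and C_sym: "\<forall>i j. i \<noteq> j \<longrightarrow> C j i = prod.swap ` C i j"
    and G_acyclic: "acyclic E"
    and s_safe: "s \<in> brake_safe vm ulow C E"
  shows "\<exists>T > 0. \<forall>i. xbar C i <
           ereal (posn (fb_flow vm T s (ctrl_law vm ulow uhigh C E)) i)"
proof -
  define h where "h = ctrl_law vm ulow uhigh C E"
  define P where "P = fb_states vm h s"
  have PS: "P (Suc k) i = slot_flow (vm i) (h (P k) i) 1 (P k i)" for k i
    by (simp add: P_def)
  have v0: "snd (P k i) \<ge> 0" for k i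
  proof (cases k)
    case 0
    then show ?thesis using s_safe by (simp add: P_def brake_safe_def state_space_def)
  next
    case (Suc m)
    then show ?thesis using vel_nonneg[of "vm i"] vm_pos by (simp add: PS slot_flow_def less_imp_le)
  qed
  have "\<forall>i. \<exists>M. xbar C i \<le> ereal M" using xbar_bound[OF C_bounded] by blast
  then obtain M where M: "\<And>i. xbar C i \<le> ereal (M i)" by metis
  have noloop: "(i, i) \<notin> E" for i using G_acyclic by (auto simp: acyclic_def)
  have "wf E" by (rule finite_acyclic_wf[OF _ G_acyclic]) simp
  have live: "\<exists>K. \<forall>k\<ge>K. fst (P k i) > M i" for i
    using \<open>wf E\<close>
  proof (induction i rule: wf_induct_rule)
    case (less i)
    then have "\<forall>j. \<exists>K. (j, i) \<in> E \<longrightarrow> (\<forall>k\<ge>K. fst (P k j) > M j)" by blast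
    then obtain Kf where Kf: "\<And>j k. (j, i) \<in> E \<Longrightarrow> k \<ge> Kf j \<Longrightarrow> fst (P k j) > M j" by metis
    define K0 where "K0 = (\<Sum>j\<in>UNIV. Kf j)"
    have uhi: "h (P k) i = uhigh i" if "k \<ge> K0" for k
      unfolding h_def
    proof (rule ctrl_high)
      show "\<forall>j. vm j \<ge> 0" using vm_pos by (simp add: less_imp_le)
      show "(i, i) \<notin> E" by (rule noloop)
      show "\<forall>j. (j, i) \<in> E \<longrightarrow> xbar C j < ereal (fst (P k j))"
      proof (intro allI impI)
        fix j assume j: "(j, i) \<in> E"
        have "Kf j \<le> K0" unfolding K0_def by (rule member_le_sum) auto
        then have "fst (P k j) > M j" using Kf[OF j] that by simp
        then show "xbar C j < ereal (fst (P k j))" using M[of j] by (meson ereal_less_eq(3) le_less_trans less_ereal.simps(1))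
      qed
    qed
    have a1: "vm i > 0" "uhigh i > 0" using vm_pos u_bounds by auto
    have a2: "\<And>k. fst (P (Suc k) i) = fst (P k i) + integral {0..1} (vel (vm i) (snd (P k i)) (h (P k) i))"
      by (simp add: PS slot_flow_def)
    have a3: "\<And>k. snd (P (Suc k) i) = vel (vm i) (snd (P k i)) (h (P k) i) 1"
      by (simp add: PS slot_flow_def)
    show ?case by (rule diverge[where p="\<lambda>k. fst (P k i)" and v="\<lambda>k. snd (P k i)" and u="\<lambda>k. h (P k) i", OF a1 a2 a3 v0 uhi])
  qed
  then obtain Kf where Kf: "\<And>i k. k \<ge> Kf i \<Longrightarrow> fst (P k i) > M i" by metis
  define N where "N = Suc (\<Sum>i\<in>UNIV. Kf i)"
  show ?thesis
  proof (intro exI conjI allI)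
    show "real N > 0" unfolding N_def by (rule of_nat_0_less_iff[THEN iffD2]) simp
    fix i
    have "Kf i \<le> (\<Sum>i\<in>UNIV. Kf i)" by (rule member_le_sum) auto
    then have "fst (P N i) > M i" using Kf[of i N] by (simp add: N_def)
    then show "xbar C i < ereal (posn (fb_flow vm (real N) s (ctrl_law vm ulow uhigh C E)) i)"
      using M[of i] fb_flow_nat[of vm N s "ctrl_law vm ulow uhigh C E" i]
      by (simp add: P_def h_def) (meson ereal_less_eq(3) le_less_trans less_ereal.simps(1))
  qed
qed

end
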